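(* Let $B$ be a commutative ring with identity which is a pm-ring, and let $A$ be a dense subring of $B$. Then for any two distinct maximal ideals $M, M'$ of $B$, the set $(M\cap A)\cap(M'\cap A)$ does not contain any prime ideal of $A$.
   Context: All rings are commutative with identity; subrings contain the identity. A pm-ring is a ring in which every prime ideal is contained in a unique maximal ideal. A subring $A$ of $B$ is dense in $B$ if for every ideal $I$ of $B$ and every $b\in B\setminus \operatorname{rad}(I)$ there exists $a\in B\setminus\operatorname{rad}(I)$ with $ab\in A$. *)

theory Defs
  imports "HOL-Algebra.Algebra"
begin

definition ideal_rad :: "('a, 'b) ring_scheme \<Rightarrow> 'a set \<Rightarrow> 'a set" where
  "ideal_rad R I = {x \<in> carrier R. \<exists>n::nat. x [^]\<^bsub>R\<^esub> n \<in> I}"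

definition pm_ring :: "('a, 'b) ring_scheme \<Rightarrow> bool" where
  "pm_ring R \<longleftrightarrow> (\<forall>P. primeideal P R \<longrightarrow> (\<exists>!M. maximalideal M R \<and> P \<subseteq> M))"

definition dense_subring :: "'a set \<Rightarrow> ('a, 'b) ring_scheme \<Rightarrow> bool" where
  "dense_subring A B \<longleftrightarrow> subring A B \<and>
     (\<forall>I. ideal I B \<longrightarrow>
        (\<forall>b \<in> carrier B - ideal_rad B I.
           \<exists>a \<in> carrier B - ideal_rad B I. a \<otimes>\<^bsub>B\<^esub> b \<in> A))"

end

theory Submission
  imports Defs
begin

lemma ne_nonempty_helper: "x \<in> A \<Longrightarrow> A \<noteq> {}" by blast

lemma (in cring) prime_avoiding:
  assumes S: "S \<subseteq> carrier R" "\<one> \<in> S" "\<zero> \<notin> S"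
    and mc: "\<And>s t. s \<in> S \<Longrightarrow> t \<in> S \<Longrightarrow> s \<otimes> t \<in> S"
  shows "\<exists>Q. primeideal Q R \<and> Q \<inter> S = {}"
proof -
  define F where "F = {I. ideal I R \<and> I \<inter> S = {}}"
  have z: "{\<zero>} \<in> F" unfolding F_def using zeroideal S(3) by simp
  hence ne: "F \<noteq> {}" by (rule ne_nonempty_helper)
  have "\<exists>Q0\<in>F. \<forall>Y\<in>F. Q0 \<subseteq> Y \<longrightarrow> Y = Q0"
  proof (rule subset_Zorn_nonempty[OF ne])
    fix C assume C: "C \<noteq> {}" "subset.chain F C"
    have CF: "C \<subseteq> F" and tot: "\<forall>X1\<in>C. \<forall>Y1\<in>C. X1 \<subseteq> Y1 \<or> Y1 \<subseteq> X1"
      using C(2) unfolding subset_chain_def by simp_all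
    have CI: "C \<subseteq> {I. ideal I R}" using CF unfolding F_def by fast
    have "subset.chain {I. ideal I R} C"
      unfolding subset_chain_def using CI tot by simp
    from chain_Union_is_ideal[OF this] C(1) have "ideal (\<Union>C) R" by simp
    moreover have "\<Union>C \<inter> S = {}" using CF unfolding F_def by fast
    ultimately show "\<Union>C \<in> F" unfolding F_def by simp
  qed
  then obtain Q where "Q \<in> F" and Qm: "\<forall>Y\<in>F. Q \<subseteq> Y \<longrightarrow> Y = Q" by blast
  hence Q: "ideal Q R" "Q \<inter> S = {}" unfolding F_def by simp_all
  have Qmax: "\<And>Y. ideal Y R \<Longrightarrow> Y \<inter> S = {} \<Longrightarrow> Q \<subseteq> Y \<Longrightarrow> Y = Q"
    using Qm unfolding F_def by simp
  interpret Q: ideal Q R by fact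
  have ext: "\<exists>q r. q \<in> Q \<and> r \<in> carrier R \<and> q \<oplus> r \<otimes> a \<in> S"
    if a: "a \<in> carrier R" "a \<notin> Q" for a
  proof -
    let ?J = "Q <+>\<^bsub>R\<^esub> PIdl a"
    have J: "ideal ?J R" using add_ideals[OF Q(1) cgenideal_ideal[OF a(1)]] .
    have QJ: "Q \<subseteq> ?J"
    proof
      fix q assume "q \<in> Q"
      hence "q = q \<oplus> \<zero> \<otimes> a" "\<zero> \<in> carrier R" using a Q.Icarr by auto
      thus "q \<in> ?J" using \<open>q \<in> Q\<close> unfolding set_add_def' cgenideal_def by blast
    qed
    have "a \<in> ?J"
    proof -
      have "a = \<zero> \<oplus> \<one> \<otimes> a" using a by simp
      thus ?thesis unfolding set_add_def' cgenideal_def using additive_subgroup.zero_closed[OF ideal.axioms(1)[OF Q(1)]] by blast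
    qed
    hence "?J \<noteq> Q" using a by blast
    hence "?J \<inter> S \<noteq> {}" using Qmax[OF J _ QJ] by blast
    then obtain s where "s \<in> ?J" "s \<in> S" by blast
    then show ?thesis unfolding set_add_def' cgenideal_def by blast
  qed
  have "primeideal Q R"
  proof (rule primeidealI[OF Q(1) is_cring])
    show "carrier R \<noteq> Q" using Q(2) S(1,2) by blast
    fix a b assume ab: "a \<in> carrier R" "b \<in> carrier R" "a \<otimes> b \<in> Q"
    show "a \<in> Q \<or> b \<in> Q"
    proof (rule ccontr)
      assume "\<not> (a \<in> Q \<or> b \<in> Q)"
      then obtain q1 r1 q2 r2 where h: "q1 \<in> Q" "r1 \<in> carrier R" "q1 \<oplus> r1 \<otimes> a \<in> S"
        "q2 \<in> Q" "r2 \<in> carrier R" "q2 \<oplus> r2 \<otimes> b \<in> S"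
        using ext ab by meson
      have c: "q1 \<in> carrier R" "q2 \<in> carrier R" using h Q.Icarr by auto
      have eq: "(q1 \<oplus> r1 \<otimes> a) \<otimes> (q2 \<oplus> r2 \<otimes> b)
         = q1 \<otimes> (q2 \<oplus> r2 \<otimes> b) \<oplus> ((r1 \<otimes> a) \<otimes> q2 \<oplus> (r1 \<otimes> r2) \<otimes> (a \<otimes> b))"
        using c h ab by algebra
      have "q1 \<otimes> (q2 \<oplus> r2 \<otimes> b) \<in> Q" using h c ab by (simp add: Q.I_r_closed)
      moreover have "(r1 \<otimes> a) \<otimes> q2 \<in> Q" using h c ab by (simp add: Q.I_l_closed)
      moreover have "(r1 \<otimes> r2) \<otimes> (a \<otimes> b) \<in> Q" using h c ab by (simp add: Q.I_l_closed)
      ultimately have "(q1 \<oplus> r1 \<otimes> a) \<otimes> (q2 \<oplus> r2 \<otimes> b) \<in> Q"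
        unfolding eq by (simp add: Q.a_closed)
      moreover have "(q1 \<oplus> r1 \<otimes> a) \<otimes> (q2 \<oplus> r2 \<otimes> b) \<in> S" using mc h by blast
      ultimately show False using Q(2) by blast
    qed
  qed
  thus ?thesis using Q(2) by blast
qed

lemma rad_prime:
  assumes "primeideal M B"
  shows "ideal_rad B M = M"
proof -
  interpret primeideal M B by fact
  have "x \<in> M" if "x \<in> carrier B" "x [^]\<^bsub>B\<^esub> (n::nat) \<in> M" for x n
    using that
  proof (induction n)
    case 0 thus ?case using I_notcarr one_imp_carrier by auto
  next
    case (Suc n)
    hence "x [^]\<^bsub>B\<^esub> n \<otimes>\<^bsub>B\<^esub> x \<in> M" by simp
    thus ?case using I_prime[of "x [^]\<^bsub>B\<^esub> n" x] Suc by auto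
  qed
  moreover have "x [^]\<^bsub>B\<^esub> (1::nat) \<in> M" if "x \<in> M" for x using that Icarr by simp
  ultimately show ?thesis unfolding ideal_rad_def using Icarr by blast
qed

theorem theorem3p7:
  fixes B :: "('a, 'b) ring_scheme" and A :: "'a set"
  assumes "cring B"
    and "pm_ring B"
    and "dense_subring A B"
    and "maximalideal M B" and "maximalideal M' B" and "M \<noteq> M'"
  shows "\<not> (\<exists>P. primeideal P (B\<lparr>carrier := A\<rparr>) \<and> P \<subseteq> (M \<inter> A) \<inter> (M' \<inter> A))"
proof
  assume "\<exists>P. primeideal P (B\<lparr>carrier := A\<rparr>) \<and> P \<subseteq> (M \<inter> A) \<inter> (M' \<inter> A)"
  then obtain P where P: "primeideal P (B\<lparr>carrier := A\<rparr>)" "P \<subseteq> (M \<inter> A) \<inter> (M' \<inter> A)" by blast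
  interpret B: cring B by fact
  have pM: "primeideal M B" using B.maximalideal_prime assms(4) by blast
  have pM': "primeideal M' B" using B.maximalideal_prime assms(5) by blast
  interpret M: primeideal M B by fact
  interpret M': primeideal M' B by fact
  have sub: "subring A B" and dense: "\<And>I b. ideal I B \<Longrightarrow> b \<in> carrier B - ideal_rad B I \<Longrightarrow>
           \<exists>a \<in> carrier B - ideal_rad B I. a \<otimes>\<^bsub>B\<^esub> b \<in> A"
    using assms(3) unfolding dense_subring_def by blast+
  define T where "T = {u \<otimes>\<^bsub>B\<^esub> v | u v. u \<in> carrier B - M \<and> v \<in> carrier B - M'}"
  show False
  proof (cases "\<zero>\<^bsub>B\<^esub> \<in> T")
    case True
    then obtain u v where uv: "u \<in> carrier B - M" "v \<in> carrier B - M'" "u \<otimes>\<^bsub>B\<^esub> v = \<zero>\<^bsub>B\<^esub>"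
      unfolding T_def by auto
    have "u \<in> carrier B - ideal_rad B M" using uv(1) unfolding rad_prime[OF pM] .
    then obtain a where a0: "a \<in> carrier B - ideal_rad B M" "a \<otimes>\<^bsub>B\<^esub> u \<in> A"
      using dense[OF M.is_ideal] by blast
    have a: "a \<in> carrier B - M" "a \<otimes>\<^bsub>B\<^esub> u \<in> A" using a0 unfolding rad_prime[OF pM] .
    have "v \<in> carrier B - ideal_rad B M'" using uv(2) unfolding rad_prime[OF pM'] .
    then obtain b where b0: "b \<in> carrier B - ideal_rad B M'" "b \<otimes>\<^bsub>B\<^esub> v \<in> A"
      using dense[OF M'.is_ideal] by blast
    have b: "b \<in> carrier B - M'" "b \<otimes>\<^bsub>B\<^esub> v \<in> A" using b0 unfolding rad_prime[OF pM'] .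
    have "(a \<otimes>\<^bsub>B\<^esub> u) \<otimes>\<^bsub>B\<^esub> (b \<otimes>\<^bsub>B\<^esub> v) = (a \<otimes>\<^bsub>B\<^esub> b) \<otimes>\<^bsub>B\<^esub> (u \<otimes>\<^bsub>B\<^esub> v)"
      using a b uv by (simp add: B.m_ac)
    also have "\<dots> = \<zero>\<^bsub>B\<^esub>" using uv a b by simp
    finally have z: "(a \<otimes>\<^bsub>B\<^esub> u) \<otimes>\<^bsub>B\<^esub> (b \<otimes>\<^bsub>B\<^esub> v) = \<zero>\<^bsub>B\<^esub>" .
    interpret P: primeideal P "B\<lparr>carrier := A\<rparr>" by fact
    have "\<zero>\<^bsub>B\<^esub> \<in> P" using additive_subgroup.zero_closed[OF ideal.axioms(1)[OF P.is_ideal]] by simp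
    hence "a \<otimes>\<^bsub>B\<^esub> u \<in> P \<or> b \<otimes>\<^bsub>B\<^esub> v \<in> P"
      using P.I_prime[of "a \<otimes>\<^bsub>B\<^esub> u" "b \<otimes>\<^bsub>B\<^esub> v"] a b z by simp
    hence "a \<otimes>\<^bsub>B\<^esub> u \<in> M \<or> b \<otimes>\<^bsub>B\<^esub> v \<in> M'" using P(2) by blast
    thus False using M.I_prime[of a u] M'.I_prime[of b v] a b uv by blast
  next
    case False
    have "\<exists>Q. primeideal Q B \<and> Q \<inter> T = {}"
    proof (rule B.prime_avoiding)
      show "T \<subseteq> carrier B" unfolding T_def by auto
      have "\<one>\<^bsub>B\<^esub> \<in> carrier B - M" using M.I_notcarr M.one_imp_carrier by auto
      moreover have "\<one>\<^bsub>B\<^esub> \<in> carrier B - M'" using M'.I_notcarr M'.one_imp_carrier by auto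
      moreover have "\<one>\<^bsub>B\<^esub> = \<one>\<^bsub>B\<^esub> \<otimes>\<^bsub>B\<^esub> \<one>\<^bsub>B\<^esub>" by simp
      ultimately show "\<one>\<^bsub>B\<^esub> \<in> T" unfolding T_def by blast
      show "\<zero>\<^bsub>B\<^esub> \<notin> T" by fact
      fix s t assume "s \<in> T" "t \<in> T"
      then obtain u v u' v' where h: "u \<in> carrier B - M" "v \<in> carrier B - M'" "s = u \<otimes>\<^bsub>B\<^esub> v"
        "u' \<in> carrier B - M" "v' \<in> carrier B - M'" "t = u' \<otimes>\<^bsub>B\<^esub> v'" unfolding T_def by blast
      have "s \<otimes>\<^bsub>B\<^esub> t = (u \<otimes>\<^bsub>B\<^esub> u') \<otimes>\<^bsub>B\<^esub> (v \<otimes>\<^bsub>B\<^esub> v')"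
        using h by (simp add: B.m_ac)
      moreover have "u \<otimes>\<^bsub>B\<^esub> u' \<in> carrier B - M" using h M.I_prime[of u u'] by auto
      moreover have "v \<otimes>\<^bsub>B\<^esub> v' \<in> carrier B - M'" using h M'.I_prime[of v v'] by auto
      ultimately show "s \<otimes>\<^bsub>B\<^esub> t \<in> T" unfolding T_def by blast
    qed
    then obtain Q where Q: "primeideal Q B" "Q \<inter> T = {}" by blast
    have Qc: "Q \<subseteq> carrier B" using ideal.Icarr[OF primeideal.axioms(1)[OF Q(1)]] by blast
    have "Q \<subseteq> M"
    proof
      fix x assume x: "x \<in> Q"
      show "x \<in> M"
      proof (rule ccontr)
        assume "x \<notin> M"
        hence "x \<in> carrier B - M" using x Qc by blast
        moreover have "\<one>\<^bsub>B\<^esub> \<in> carrier B - M'" using M'.I_notcarr M'.one_imp_carrier by auto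
        ultimately have "x \<otimes>\<^bsub>B\<^esub> \<one>\<^bsub>B\<^esub> \<in> T" unfolding T_def by blast
        moreover have "x \<in> carrier B" using x Qc by blast
        ultimately show False using x Q(2) by (simp add: disjoint_iff)
      qed
    qed
    moreover have "Q \<subseteq> M'"
    proof
      fix x assume x: "x \<in> Q"
      show "x \<in> M'"
      proof (rule ccontr)
        assume "x \<notin> M'"
        hence "x \<in> carrier B - M'" using x Qc by blast
        moreover have "\<one>\<^bsub>B\<^esub> \<in> carrier B - M" using M.I_notcarr M.one_imp_carrier by auto
        ultimately have "\<one>\<^bsub>B\<^esub> \<otimes>\<^bsub>B\<^esub> x \<in> T" unfolding T_def by blast
        moreover have "x \<in> carrier B" using x Qc by blast
        ultimately show False using x Q(2) by (simp add: disjoint_iff)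
      qed
    qed
    moreover have "\<exists>!N. maximalideal N B \<and> Q \<subseteq> N" using assms(2) Q(1) unfolding pm_ring_def by blast
    ultimately have "M = M'" using assms(4,5) by (metis (no_types, lifting))
    thus False using assms(6) by contradiction
  qed
qed

end
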